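(* Let $X\sim\mathbb{P}$ be a random element of a sample space $\mathcal{X}$, let $G$ be a compact topological group acting on $\mathcal{X}$ (written $(g,x)\mapsto gx$), and let $\mathbb{Q}$ be the Haar probability measure on $G$. Assume exact invariance: for $\mathbb{Q}$-almost all $g\in G$, $gX$ has the same distribution as $X$. Let $f:\mathcal{X}\to\mathbb{R}^k$ be a function such that the map $(x,g)\mapsto f(gx)$ belongs to $L^2(\mathbb{P}\times\mathbb{Q})$, and define the orbit average $\bar f(x):=\mathbb{E}_{g\sim\mathbb{Q}} f(gx)$. Then: 1. For any $x$, $\bar f(x)=\mathbb{E}[f(X)\mid X\in Gx]$, where $Gx=\{gx:g\in G\}$ is the orbit of $x$; i.e., $\bar f$ is the conditional expectation of $f(X)$ given the orbit of $X$. 2. $\mathbb{E}_{X\sim\mathbb{P}} f(X)=\mathbb{E}_{X\sim\mathbb{P}}\bar f(X)$. 3. $\mathrm{Cov}_{X\sim\mathbb{P}} f(X)=\mathrm{Cov}_{X\sim\mathbb{P}}\bar f(X)+\mathbb{E}_{X\sim\mathbb{P}}\mathrm{Cov}_{g\sim\mathbb{Q}} f(gX)$. 4. For any real-valued convex function $\varphi$ on $\mathbb{R}^k$, $\mathbb{E}_{X\sim\mathbb{P}}[\varphi(f(X))]\ge \mathbb{E}_{X\sim\mathbb{P}}[\varphi(\bar f(X))]$.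
   Context: A group action satisfies $ex=x$ for the identity $e$ and $(gh)x=g(hx)$. The Haar probability measure $\mathbb{Q}$ is translation invariant: $\mathbb{Q}(gS)=\mathbb{Q}(Sg)=\mathbb{Q}(S)$ for all $g\in G$ and measurable $S\subseteq G$. $\mathrm{Cov}_{g\sim\mathbb{Q}} f(gX)$ denotes the covariance matrix of $f(gX)$ over $g\sim\mathbb{Q}$ with $X$ held fixed. *)

theory Defs
  imports "HOL-Probability.Probability" "HOL-Algebra.Group_Action" "HOL-Algebra.Coset"
begin

definition compact_topological_group :: "('g, 'b) monoid_scheme \<Rightarrow> 'g topology \<Rightarrow> bool" where
  "compact_topological_group G T \<longleftrightarrow>
     group G \<and> topspace T = carrier G \<and>
     continuous_map (prod_topology T T) T (\<lambda>(a, b). a \<otimes>\<^bsub>G\<^esub> b) \<and>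
     continuous_map T T (\<lambda>a. inv\<^bsub>G\<^esub> a) \<and>
     compact_space T"

definition haar_probability :: "('g, 'b) monoid_scheme \<Rightarrow> 'g topology \<Rightarrow> 'g measure \<Rightarrow> bool" where
  "haar_probability G T Q \<longleftrightarrow>
     prob_space Q \<and>
     sets Q = sigma_sets (topspace T) {U. openin T U} \<and>
     space Q = topspace T \<and>
     (\<forall>g \<in> carrier G. \<forall>S \<in> sets Q.
        measure Q (g <#\<^bsub>G\<^esub> S) = measure Q S \<and> measure Q (S #>\<^bsub>G\<^esub> g) = measure Q S)"

definition orbit_avg :: "'g measure \<Rightarrow> ('g \<Rightarrow> 'x \<Rightarrow> 'x) \<Rightarrow> ('x \<Rightarrow> real^'k) \<Rightarrow> 'x \<Rightarrow> real^'k" where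
  "orbit_avg Q act f x = (LINT g|Q. f (act g x))"

definition orbit_sigma :: "'x measure \<Rightarrow> ('g, 'b) monoid_scheme \<Rightarrow> ('g \<Rightarrow> 'x \<Rightarrow> 'x) \<Rightarrow> 'x measure" where
  "orbit_sigma P G act =
     sigma (space P) {A \<in> sets P. \<forall>x \<in> A. orbit G act x \<subseteq> A}"

definition cov_mat :: "'a measure \<Rightarrow> ('a \<Rightarrow> real^'k) \<Rightarrow> real^'k^'k" where
  "cov_mat M h = (\<chi> i j. LINT x|M. (h x $ i - (LINT y|M. h y $ i)) * (h x $ j - (LINT y|M. h y $ j)))"

end

theory Submission
  imports Defs
begin

lemma nth_meas[measurable (raw)]:
  fixes F :: "'a \<Rightarrow> real^'n"
  shows "F \<in> borel_measurable M \<Longrightarrow> (\<lambda>x. F x $ i) \<in> borel_measurable M"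
  using measurable_compose[OF _ borel_measurable_nth] by blast

lemma strict_epi_convex:
  fixes \<phi> :: "'a::euclidean_space \<Rightarrow> real"
  assumes cv: "convex_on UNIV \<phi>"
  shows "convex {z. \<phi> (fst z) < snd z}"
  unfolding convex_def
proof (intro ballI allI impI)
  fix x y :: "'a \<times> real" and u v :: real
  assume x: "x \<in> {z. \<phi> (fst z) < snd z}" and y: "y \<in> {z. \<phi> (fst z) < snd z}"
    and u: "0 \<le> u" and v: "0 \<le> v" and uv: "u + v = 1"
  have le: "\<phi> ((1 - v) *\<^sub>R fst x + v *\<^sub>R fst y) \<le> (1 - v) * \<phi> (fst x) + v * \<phi> (fst y)"
    using convex_onD[OF cv, of v "fst x" "fst y"] u v uv by auto
  have "(1 - v) * \<phi> (fst x) + v * \<phi> (fst y) < (1 - v) * snd x + v * snd y"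
  proof (cases "v = 0")
    case True then show ?thesis using x by simp
  next
    case False
    then have "v > 0" using v by simp
    then have "v * \<phi> (fst y) < v * snd y" using y by simp
    moreover have "(1 - v) * \<phi> (fst x) \<le> (1 - v) * snd x"
      using x u uv by (intro mult_left_mono) auto
    ultimately show ?thesis by simp
  qed
  then have "\<phi> ((1 - v) *\<^sub>R fst x + v *\<^sub>R fst y) < (1 - v) * snd x + v * snd y"
    using le by linarith
  moreover have "u = 1 - v" using uv by simp
  ultimately show "u *\<^sub>R x + v *\<^sub>R y \<in> {z. \<phi> (fst z) < snd z}"
    by simp
qed

lemma subgradient:
  fixes \<phi> :: "'a::euclidean_space \<Rightarrow> real"
  assumes cv: "convex_on UNIV \<phi>"
  shows "\<exists>a. \<forall>y. \<phi> c + inner a (y - c) \<le> \<phi> y"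
proof -
  have "\<exists>a b. a \<noteq> 0 \<and> (\<forall>x\<in>{(c, \<phi> c)}. inner a x \<le> b) \<and> (\<forall>x\<in>{z. \<phi> (fst z) < snd z}. inner a x \<ge> b)"
  proof (rule separating_hyperplane_sets)
    have "(c, \<phi> c + 1) \<in> {z. \<phi> (fst z) < snd z}" by simp
    then show "{z. \<phi> (fst z) < snd z} \<noteq> {}" by blast
  qed (auto simp: strict_epi_convex[OF cv])
  then obtain a b where ab: "a \<noteq> 0" "inner a (c, \<phi> c) \<le> b" "\<And>z. \<phi> (fst z) < snd z \<Longrightarrow> inner a z \<ge> b"
    by auto
  obtain a1 s where a: "a = (a1, s)" by (cases a)
  have key: "\<And>y t. \<phi> y < t \<Longrightarrow> inner a1 c + s * \<phi> c \<le> inner a1 y + s * t"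
    using ab(2) ab(3) a by (fastforce simp: inner_Pair)
  have s0: "s \<ge> 0" using key[of c "\<phi> c + 1"] by (simp add: algebra_simps)
  have sne: "s \<noteq> 0"
  proof
    assume "s = 0"
    then have "inner a1 c \<le> inner a1 (c - a1)" using key[of "c - a1" "\<phi> (c - a1) + 1"] by simp
    then have "inner a1 a1 \<le> 0" by (simp add: inner_diff_right)
    then have "a1 = 0" by (metis inner_eq_zero_iff inner_ge_zero order_antisym)
    then show False using ab(1) a \<open>s = 0\<close> by (simp add: zero_prod_def)
  qed
  then have spos: "s > 0" using s0 by simp
  have main: "\<phi> c + inner (- (1 / s) *\<^sub>R a1) (y - c) \<le> \<phi> y" for y
  proof -
    have "s * \<phi> c \<le> inner a1 (y - c) + s * \<phi> y"
    proof (rule field_le_epsilon)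
      fix e :: real assume e: "e > 0"
      have "inner a1 c + s * \<phi> c \<le> inner a1 y + s * (\<phi> y + e / s)"
        using key[of y "\<phi> y + e / s"] e spos by simp
      then show "s * \<phi> c \<le> inner a1 (y - c) + s * \<phi> y + e"
        using spos by (simp add: inner_diff_right algebra_simps)
    qed
    then have "\<phi> c \<le> (inner a1 (y - c)) / s + \<phi> y"
      using spos by (simp add: field_simps)
    then show ?thesis by (simp add: algebra_simps inner_diff_right diff_divide_distrib)
  qed
  then show ?thesis by blast
qed

lemma jensen_vec:
  fixes \<phi> :: "'a::euclidean_space \<Rightarrow> real" and h :: "'b \<Rightarrow> 'a"
  assumes M: "prob_space M" and cv: "convex_on UNIV \<phi>"
    and hi: "integrable M h" and phi: "integrable M (\<lambda>x. \<phi> (h x))"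
  shows "\<phi> (\<integral>x. h x \<partial>M) \<le> (\<integral>x. \<phi> (h x) \<partial>M)"
proof -
  interpret prob_space M by (rule M)
  define c where "c = (\<integral>x. h x \<partial>M)"
  obtain a where a: "\<And>y. \<phi> c + inner a (y - c) \<le> \<phi> y" using subgradient[OF cv] by blast
  have "(\<integral>x. \<phi> c + (inner a (h x) - inner a c) \<partial>M) \<le> (\<integral>x. \<phi> (h x) \<partial>M)"
    using a hi phi by (intro integral_mono) (auto simp: inner_diff_right)
  moreover have "(\<integral>x. \<phi> c + (inner a (h x) - inner a c) \<partial>M) = \<phi> c"
    using hi by (simp add: c_def prob_space)
  ultimately show ?thesis by (simp add: c_def)
qed

lemma cov_expand:
  fixes a b :: "'b \<Rightarrow> real"
  assumes M: "prob_space M" and ai: "integrable M a" and bi: "integrable M b"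
    and abi: "integrable M (\<lambda>x. a x * b x)"
  shows "(\<integral>x. (a x - (\<integral>y. a y \<partial>M)) * (b x - (\<integral>y. b y \<partial>M)) \<partial>M)
         = (\<integral>x. a x * b x \<partial>M) - (\<integral>x. a x \<partial>M) * (\<integral>x. b x \<partial>M)"
proof -
  interpret prob_space M by (rule M)
  define A where "A = (\<integral>y. a y \<partial>M)"
  define B where "B = (\<integral>y. b y \<partial>M)"
  have "(\<integral>x. (a x - A) * (b x - B) \<partial>M) = (\<integral>x. (a x * b x - B * a x) - (A * b x - A * B) \<partial>M)"
    by (simp add: algebra_simps)
  also have "\<dots> = (\<integral>x. a x * b x \<partial>M) - A * B"
    using ai bi abi by (simp add: A_def B_def prob_space)
  finally show ?thesis by (simp add: A_def B_def)
qed

lemma mat_decomp: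
  fixes F :: "real^'k^'k"
  shows "F = (\<Sum>i\<in>UNIV. \<Sum>j\<in>UNIV. (F $ i $ j) *\<^sub>R axis i (axis j 1))"
proof -
  have "(\<Sum>i\<in>UNIV. \<Sum>j\<in>UNIV. (F $ i $ j) *\<^sub>R axis i (axis j (1::real))) $ a $ b = F $ a $ b" for a b
  proof -
    have "(\<Sum>i\<in>UNIV. \<Sum>j\<in>UNIV. (F $ i $ j) *\<^sub>R axis i (axis j (1::real))) $ a $ b
        = (\<Sum>i\<in>UNIV. \<Sum>j\<in>UNIV. (F $ i $ j) * (if i = a then (if j = b then 1 else 0) else 0))"
      unfolding sum_component vector_scaleR_component by (intro sum.cong refl) (auto simp: axis_def)
    also have "\<dots> = (\<Sum>i\<in>UNIV. if i = a then F $ a $ b else 0)"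
    proof (intro sum.cong refl)
      fix i show "(\<Sum>j\<in>UNIV. (F $ i $ j) * (if i = a then (if j = b then 1 else 0) else 0)) = (if i = a then F $ a $ b else 0)"
        by (cases "i = a") (simp_all add: if_distrib[of "\<lambda>x. _ * x"] cong: if_cong)
    qed
    also have "\<dots> = F $ a $ b" by simp
    finally show ?thesis .
  qed
  then show ?thesis by (simp add: vec_eq_iff)
qed

lemma mat_integrable:
  fixes F :: "'a \<Rightarrow> real^'k^'k"
  assumes "\<And>i j. integrable M (\<lambda>x. F x $ i $ j)"
  shows "integrable M F" "\<And>i j. (\<integral>x. F x \<partial>M) $ i $ j = (\<integral>x. F x $ i $ j \<partial>M)"
proof -
  have "integrable M (\<lambda>x. \<Sum>i\<in>UNIV. \<Sum>j\<in>UNIV. (F x $ i $ j) *\<^sub>R axis i (axis j (1::real)))"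
    using assms by (intro Bochner_Integration.integrable_sum integrable_scaleR_left) auto
  moreover have "(\<lambda>x. \<Sum>i\<in>UNIV. \<Sum>j\<in>UNIV. (F x $ i $ j) *\<^sub>R axis i (axis j (1::real))) = F"
    by (rule ext) (rule mat_decomp[symmetric])
  ultimately show I: "integrable M F" by simp
  fix i j
  have "(\<integral>x. F x \<partial>M) $ i $ j = (\<integral>x. F x $ i \<partial>M) $ j"
    using integral_bounded_linear[OF bounded_linear_vec_nth I, of i] by simp
  also have "\<dots> = (\<integral>x. F x $ i $ j \<partial>M)"
    using integral_bounded_linear[OF bounded_linear_vec_nth integrable_bounded_linear[OF bounded_linear_vec_nth I], of i j] by simp
  finally show "(\<integral>x. F x \<partial>M) $ i $ j = (\<integral>x. F x $ i $ j \<partial>M)" .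
qed


locale L4 =
  fixes P :: "'x measure" and G :: "('g, 'b) monoid_scheme" and T :: "'g topology"
    and Q :: "'g measure" and act :: "'g \<Rightarrow> 'x \<Rightarrow> 'x"
  assumes P: "prob_space P"
    and G: "compact_topological_group G T"
    and Q: "haar_probability G T Q"
    and action: "group_action G (space P) act"
    and act_meas: "(\<lambda>(g, x). act g x) \<in> measurable (Q \<Otimes>\<^sub>M P) P"
    and invariance: "AE g in Q. distr P P (act g) = P"
begin

lemma PQ: "prob_space Q" "space Q = carrier G" "group G" "pair_prob_space P Q" "pair_sigma_finite P Q"
  "sets Q = sigma_sets (topspace T) {U. openin T U}" "topspace T = carrier G"
proof -
  show Q1: "prob_space Q" "space Q = carrier G" "group G" "sets Q = sigma_sets (topspace T) {U. openin T U}"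
    "topspace T = carrier G"
    using G Q unfolding haar_probability_def compact_topological_group_def by auto
  show "pair_prob_space P Q" using P Q1 by (simp add: pair_prob_space_def pair_sigma_finite_def prob_space_imp_sigma_finite)
  then show "pair_sigma_finite P Q" by (simp add: pair_prob_space_def pair_sigma_finite_def prob_space_imp_sigma_finite)
qed

lemma act_g_meas: "g \<in> space Q \<Longrightarrow> act g \<in> measurable P P"
  using measurable_Pair2[OF act_meas, of g] by simp

lemma act_x_meas: "x \<in> space P \<Longrightarrow> (\<lambda>g. act g x) \<in> measurable Q P"
  using measurable_Pair1[OF act_meas, of x] by simp

lemma act_meas2[measurable]: "(\<lambda>(x, g). act g x) \<in> measurable (P \<Otimes>\<^sub>M Q) P"
proof -
  have "(\<lambda>(g, x). act g x) \<circ> (\<lambda>(x,g). (g, x)) \<in> measurable (P \<Otimes>\<^sub>M Q) P"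
    by (rule measurable_comp[OF measurable_pair_swap' act_meas])
  then show ?thesis by (simp add: comp_def case_prod_beta')
qed

lemma nn_transfer:
  assumes h[measurable]: "h \<in> borel_measurable P"
  shows "(\<integral>\<^sup>+ z. h (case z of (x, g) \<Rightarrow> act g x) \<partial>(P \<Otimes>\<^sub>M Q)) = (\<integral>\<^sup>+ x. h x \<partial>P)"
proof -
  interpret pair_sigma_finite P Q by (rule PQ)
  interpret Qp: prob_space Q by (rule PQ)
  have m: "(\<lambda>z. h (case z of (x, g) \<Rightarrow> act g x)) \<in> borel_measurable (P \<Otimes>\<^sub>M Q)"
    by measurable
  have "(\<integral>\<^sup>+ z. h (case z of (x, g) \<Rightarrow> act g x) \<partial>(P \<Otimes>\<^sub>M Q))
      = (\<integral>\<^sup>+ g. (\<integral>\<^sup>+ x. h (act g x) \<partial>P) \<partial>Q)"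
    using nn_integral_snd[OF m] by simp
  also have "\<dots> = (\<integral>\<^sup>+ g. (\<integral>\<^sup>+ x. h x \<partial>P) \<partial>Q)"
  proof (rule nn_integral_cong_AE)
    show "AE g in Q. (\<integral>\<^sup>+ x. h (act g x) \<partial>P) = (\<integral>\<^sup>+ x. h x \<partial>P)"
      using invariance AE_space
    proof eventually_elim
      case (elim g)
      then have True: "g \<in> space Q" by simp
        have "(\<integral>\<^sup>+ x. h x \<partial>P) = (\<integral>\<^sup>+ x. h x \<partial>(distr P P (act g)))" using elim by simp
        also have "\<dots> = (\<integral>\<^sup>+ x. h (act g x) \<partial>P)"
          by (rule nn_integral_distr[OF act_g_meas[OF True]]) simp
        finally show ?case by simp
    qed
  qed
  also have "\<dots> = (\<integral>\<^sup>+ x. h x \<partial>P)"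
    by (simp add: Qp.emeasure_space_1)
  finally show ?thesis .
qed

lemma int_transfer_iff:
  fixes h :: "'x \<Rightarrow> 'a::{banach, second_countable_topology}"
  assumes h[measurable]: "h \<in> borel_measurable P"
  shows "integrable (P \<Otimes>\<^sub>M Q) (\<lambda>(x, g). h (act g x)) \<longleftrightarrow> integrable P h"
proof -
  have m: "(\<lambda>(x, g). h (act g x)) \<in> borel_measurable (P \<Otimes>\<^sub>M Q)" by measurable
  have e: "(\<lambda>(x, g). h (act g x)) = (\<lambda>z. h (case z of (x, g) \<Rightarrow> act g x))" by (auto simp: fun_eq_iff)
  have "(\<integral>\<^sup>+ z. ennreal (norm ((\<lambda>(x, g). h (act g x)) z)) \<partial>(P \<Otimes>\<^sub>M Q)) = (\<integral>\<^sup>+ x. ennreal (norm (h x)) \<partial>P)"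
    using nn_transfer[of "\<lambda>x. ennreal (norm (h x))"] by (simp add: e)
  then show ?thesis using m unfolding integrable_iff_bounded by simp
qed

lemma int_transfer:
  fixes h :: "'x \<Rightarrow> 'a::{banach, second_countable_topology}"
  assumes h[measurable]: "h \<in> borel_measurable P" and hi: "integrable P h"
  shows "integrable (P \<Otimes>\<^sub>M Q) (\<lambda>(x, g). h (act g x))"
    and "AE x in P. integrable Q (\<lambda>g. h (act g x))"
    and "integrable P (\<lambda>x. \<integral>g. h (act g x) \<partial>Q)"
    and "(\<integral>x. (\<integral>g. h (act g x) \<partial>Q) \<partial>P) = (\<integral>x. h x \<partial>P)"
proof -
  interpret pair_sigma_finite P Q by (rule PQ)
  interpret Qp: prob_space Q by (rule PQ)
  show I: "integrable (P \<Otimes>\<^sub>M Q) (\<lambda>(x, g). h (act g x))" using int_transfer_iff[OF h] hi by simp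
  show "AE x in P. integrable Q (\<lambda>g. h (act g x))" using AE_integrable_fst'[OF I] by simp
  show "integrable P (\<lambda>x. \<integral>g. h (act g x) \<partial>Q)" using integrable_fst'[OF I] by simp
  have "(\<integral>x. (\<integral>g. h (act g x) \<partial>Q) \<partial>P) = integral\<^sup>L (P \<Otimes>\<^sub>M Q) (\<lambda>(x, g). h (act g x))"
    using integral_fst'[OF I] by simp
  also have "\<dots> = (\<integral>g. (\<integral>x. h (act g x) \<partial>P) \<partial>Q)"
    using integral_snd[of "\<lambda>x g. h (act g x)"] I by simp
  also have "\<dots> = (\<integral>g. (\<integral>x. h x \<partial>P) \<partial>Q)"
  proof (rule integral_cong_AE)
    show "AE g in Q. (\<integral>x. h (act g x) \<partial>P) = (\<integral>x. h x \<partial>P)"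
      using invariance AE_space
    proof eventually_elim
      case (elim g)
      then have gQ: "g \<in> space Q" by simp
      have "(\<integral>x. h x \<partial>P) = (\<integral>x. h x \<partial>(distr P P (act g)))" using elim by simp
      also have "\<dots> = (\<integral>x. h (act g x) \<partial>P)"
        by (rule integral_distr[OF act_g_meas[OF gQ]]) simp
      finally show ?case by simp
    qed
  next
    show "(\<lambda>g. \<integral>x. h (act g x) \<partial>P) \<in> borel_measurable Q"
    proof -
      have "(\<lambda>(g, x). h (act g x)) \<in> borel_measurable (Q \<Otimes>\<^sub>M P)"
        using measurable_comp[OF act_meas h] by (simp add: comp_def case_prod_beta')
      then show ?thesis by (rule sigma_finite_measure.borel_measurable_lebesgue_integral[OF M1.sigma_finite_measure_axioms])
    qed
  qed simp
  also have "\<dots> = (\<integral>x. h x \<partial>P)" by (simp add: Qp.prob_space)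
  finally show "(\<integral>x. (\<integral>g. h (act g x) \<partial>Q) \<partial>P) = (\<integral>x. h x \<partial>P)" .
qed

lemma rmult_meas:
  assumes h: "h \<in> carrier G"
  shows "(\<lambda>g. g \<otimes>\<^bsub>G\<^esub> h) \<in> measurable Q Q"
proof -
  interpret group G by (rule PQ)
  interpret Qp: prob_space Q by (rule PQ)
  have cm: "continuous_map T T (\<lambda>g. g \<otimes>\<^bsub>G\<^esub> h)"
  proof -
    have c: "continuous_map (prod_topology T T) T (\<lambda>(a, b). a \<otimes>\<^bsub>G\<^esub> b)"
      using G unfolding compact_topological_group_def by auto
    have "continuous_map T (prod_topology T T) (\<lambda>g. (g, h))"
      using h PQ(7) by (intro continuous_map_pairedI) auto
    from continuous_map_compose[OF this c] show ?thesis by (simp add: o_def)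
  qed
  show meas: "(\<lambda>g. g \<otimes>\<^bsub>G\<^esub> h) \<in> measurable Q Q"
  proof (rule measurable_sigma_sets[OF PQ(6)])
    show "{U. openin T U} \<subseteq> Pow (topspace T)" by (auto dest: openin_subset)
    show "(\<lambda>g. g \<otimes>\<^bsub>G\<^esub> h) \<in> space Q \<rightarrow> topspace T" using h PQ by auto
    fix U assume "U \<in> {U. openin T U}"
    then have "openin T {x \<in> topspace T. x \<otimes>\<^bsub>G\<^esub> h \<in> U}"
      using cm by (simp add: continuous_map_def)
    moreover have "{x \<in> topspace T. x \<otimes>\<^bsub>G\<^esub> h \<in> U} = (\<lambda>g. g \<otimes>\<^bsub>G\<^esub> h) -` U \<inter> space Q"
      using PQ by auto
    ultimately show "(\<lambda>g. g \<otimes>\<^bsub>G\<^esub> h) -` U \<inter> space Q \<in> sets Q"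
      using PQ(6) by auto
  qed
qed

lemma right_inv:
  assumes h: "h \<in> carrier G"
  shows "distr Q Q (\<lambda>g. g \<otimes>\<^bsub>G\<^esub> h) = Q"
proof -
  interpret group G by (rule PQ)
  interpret Qp: prob_space Q by (rule PQ)
  note meas = rmult_meas[OF h]
  show ?thesis
  proof (rule measure_eqI)
    show "sets (distr Q Q (\<lambda>g. g \<otimes>\<^bsub>G\<^esub> h)) = sets Q" by simp
    fix A assume A: "A \<in> sets (distr Q Q (\<lambda>g. g \<otimes>\<^bsub>G\<^esub> h))"
    then have AQ: "A \<in> sets Q" by simp
    have Asub: "A \<subseteq> carrier G" using sets.sets_into_space[OF AQ] PQ by auto
    have eq: "(\<lambda>g. g \<otimes>\<^bsub>G\<^esub> h) -` A \<inter> space Q = A #>\<^bsub>G\<^esub> inv\<^bsub>G\<^esub> h"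
    proof (intro equalityI subsetI)
      fix g assume "g \<in> (\<lambda>g. g \<otimes>\<^bsub>G\<^esub> h) -` A \<inter> space Q"
      then have g: "g \<in> carrier G" "g \<otimes>\<^bsub>G\<^esub> h \<in> A" using PQ by auto
      then have "g = (g \<otimes>\<^bsub>G\<^esub> h) \<otimes>\<^bsub>G\<^esub> inv\<^bsub>G\<^esub> h" using h by (simp add: m_assoc)
      then show "g \<in> A #>\<^bsub>G\<^esub> inv\<^bsub>G\<^esub> h" unfolding r_coset_def using g by blast
    next
      fix g assume "g \<in> A #>\<^bsub>G\<^esub> inv\<^bsub>G\<^esub> h"
      then obtain a where a: "a \<in> A" "g = a \<otimes>\<^bsub>G\<^esub> inv\<^bsub>G\<^esub> h" unfolding r_coset_def by blast
      then have "a \<in> carrier G" using Asub by auto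
      then have "g \<otimes>\<^bsub>G\<^esub> h = a" "g \<in> carrier G" using a h by (simp_all add: m_assoc)
      then show "g \<in> (\<lambda>g. g \<otimes>\<^bsub>G\<^esub> h) -` A \<inter> space Q" using a PQ by auto
    qed
    have inS: "A #>\<^bsub>G\<^esub> inv\<^bsub>G\<^esub> h \<in> sets Q" using measurable_sets[OF meas AQ] eq by simp
    have "measure Q (A #>\<^bsub>G\<^esub> inv\<^bsub>G\<^esub> h) = measure Q A"
      using Q h AQ unfolding haar_probability_def by auto
    then show "emeasure (distr Q Q (\<lambda>g. g \<otimes>\<^bsub>G\<^esub> h)) A = emeasure Q A"
      using emeasure_distr[OF meas AQ] eq by (simp add: Qp.emeasure_eq_measure)
  qed
qed

lemma avg_invariant:
  fixes F :: "'x \<Rightarrow> real^'k"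
  assumes F[measurable]: "F \<in> borel_measurable P" and x: "x \<in> space P" and h: "h \<in> carrier G"
  shows "orbit_avg Q act F (act h x) = orbit_avg Q act F x"
proof -
  interpret group_action G "space P" act by (rule action)
  have "orbit_avg Q act F (act h x) = (\<integral>g. F (act (g \<otimes>\<^bsub>G\<^esub> h) x) \<partial>Q)"
    unfolding orbit_avg_def
    by (rule Bochner_Integration.integral_cong) (auto simp: composition_rule x h PQ)
  also have "\<dots> = (\<integral>g. F (act g x) \<partial>(distr Q Q (\<lambda>g. g \<otimes>\<^bsub>G\<^esub> h)))"
    by (rule integral_distr[symmetric]) (use rmult_meas[OF h] measurable_comp[OF act_x_meas[OF x] F] in \<open>auto simp: comp_def\<close>)
  also have "\<dots> = orbit_avg Q act F x" by (simp add: right_inv[OF h] orbit_avg_def)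
  finally show ?thesis .
qed

definition "Inv = {A \<in> sets P. \<forall>x \<in> A. orbit G act x \<subseteq> A}"

lemma Inv_sigma: "sigma_algebra (space P) Inv"
proof -
  interpret group_action G "space P" act by (rule action)
  interpret group G by (rule PQ)
  show ?thesis unfolding sigma_algebra_iff2
  proof (intro conjI allI ballI impI)
    show "Inv \<subseteq> Pow (space P)" unfolding Inv_def using sets.sets_into_space by auto
    show "{} \<in> Inv" unfolding Inv_def by auto
  next
    fix s assume s: "s \<in> Inv"
    show "space P - s \<in> Inv"
      unfolding Inv_def
    proof (intro CollectI conjI ballI subsetI)
      show "space P - s \<in> sets P" using s unfolding Inv_def by auto
      fix x y assume x: "x \<in> space P - s" and y: "y \<in> orbit G act x"
      then obtain g where g: "g \<in> carrier G" "y = act g x" unfolding orbit_def by auto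
      have yE: "y \<in> space P" using element_image g x by auto
      show "y \<in> space P - s"
      proof (rule ccontr)
        assume "y \<notin> space P - s"
        then have "y \<in> s" using yE by auto
        then have "orbit G act y \<subseteq> s" using s unfolding Inv_def by auto
        moreover have "act (inv\<^bsub>G\<^esub> g) y = x" using orbit_sym_aux g x by auto
        moreover have "act (inv\<^bsub>G\<^esub> g) y \<in> orbit G act y" unfolding orbit_def using g by auto
        ultimately show False using x by auto
      qed
    qed
  next
    fix A :: "nat \<Rightarrow> 'x set" assume "range A \<subseteq> Inv"
    then show "\<Union> (range A) \<in> Inv" unfolding Inv_def by blast
  qed
qed

lemma orbit_sigma_sets: "sets (orbit_sigma P G act) = Inv" and orbit_sigma_space: "space (orbit_sigma P G act) = space P"
proof -
  have sub: "Inv \<subseteq> Pow (space P)" unfolding Inv_def using sets.sets_into_space by auto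
  show "sets (orbit_sigma P G act) = Inv"
    unfolding orbit_sigma_def Inv_def[symmetric]
    using sigma_algebra.sigma_sets_eq[OF Inv_sigma] sub by simp
  show "space (orbit_sigma P G act) = space P"
    unfolding orbit_sigma_def Inv_def[symmetric] using sub by simp
qed

lemma subalg: "subalgebra P (orbit_sigma P G act)"
  unfolding subalgebra_def using orbit_sigma_sets orbit_sigma_space Inv_def by auto

lemma sfs: "sigma_finite_subalgebra P (orbit_sigma P G act)"
proof -
  interpret prob_space P by (rule P)
  have "finite_measure_subalgebra P (orbit_sigma P G act)"
    by (intro finite_measure_subalgebra.intro finite_measure_axioms) (simp add: finite_measure_subalgebra_axioms_def subalg)
  then show ?thesis by (rule finite_measure_subalgebra_is_sigma_finite)
qed

lemma ind_inv:
  assumes A: "A \<in> sets (orbit_sigma P G act)" and x: "x \<in> space P" and g: "g \<in> carrier G"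
  shows "indicator A (act g x) = (indicator A x :: real)"
proof -
  interpret group_action G "space P" act by (rule action)
  interpret group G by (rule PQ)
  have A': "A \<in> sets P" "\<And>y. y \<in> A \<Longrightarrow> orbit G act y \<subseteq> A" using A orbit_sigma_sets Inv_def by auto
  have "act g x \<in> A \<longleftrightarrow> x \<in> A"
  proof
    assume "x \<in> A" then show "act g x \<in> A" using A'(2)[of x] g unfolding orbit_def by auto
  next
    assume a: "act g x \<in> A"
    have "act (inv\<^bsub>G\<^esub> g) (act g x) = x" using orbit_sym_aux g x by auto
    moreover have "act (inv\<^bsub>G\<^esub> g) (act g x) \<in> orbit G act (act g x)" unfolding orbit_def using g by auto
    ultimately show "x \<in> A" using A'(2)[OF a] by auto
  qed
  then show ?thesis by (simp add: indicator_def)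
qed

lemma inv_meas:
  fixes F :: "'x \<Rightarrow> real"
  assumes F: "F \<in> borel_measurable P"
    and inv: "\<And>x g. x \<in> space P \<Longrightarrow> g \<in> carrier G \<Longrightarrow> F (act g x) = F x"
  shows "F \<in> borel_measurable (orbit_sigma P G act)"
proof (rule measurableI)
  interpret group_action G "space P" act by (rule action)
  fix x assume "x \<in> space (orbit_sigma P G act)"
  then show "F x \<in> space borel" by simp
next
  interpret group_action G "space P" act by (rule action)
  fix B :: "real set" assume B: "B \<in> sets borel"
  have "F -` B \<inter> space P \<in> Inv"
    unfolding Inv_def
  proof (intro CollectI conjI ballI subsetI)
    show "F -` B \<inter> space P \<in> sets P" using measurable_sets[OF F B] .
    fix x y assume x: "x \<in> F -` B \<inter> space P" and y: "y \<in> orbit G act x"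
    then obtain g where g: "g \<in> carrier G" "y = act g x" unfolding orbit_def by auto
    have yE: "y \<in> space P" using element_image g x by auto
    then show "y \<in> F -` B \<inter> space P" using inv[of x g] g x by auto
  qed
  then show "F -` B \<inter> space (orbit_sigma P G act) \<in> sets (orbit_sigma P G act)"
    using orbit_sigma_sets orbit_sigma_space by simp
qed

end

locale L4f = L4 P G T Q act for P :: "'x measure" and G :: "('g, 'b) monoid_scheme" and T :: "'g topology"
    and Q :: "'g measure" and act :: "'g \<Rightarrow> 'x \<Rightarrow> 'x" +
  fixes f :: "'x \<Rightarrow> real^'k"
  assumes f_meas[measurable]: "f \<in> borel_measurable P"
    and L2_meas: "(\<lambda>(x, g). f (act g x)) \<in> borel_measurable (P \<Otimes>\<^sub>M Q)"
    and L2_int: "integrable (P \<Otimes>\<^sub>M Q) (\<lambda>(x, g). (norm (f (act g x)))\<^sup>2)"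
begin

lemma Qsf: "sigma_finite_measure Q"
  using PQ(1) by (simp add: prob_space_imp_sigma_finite)

lemma act_meas3[measurable]: "(\<lambda>z. act (snd z) (fst z)) \<in> measurable (P \<Otimes>\<^sub>M Q) P"
  using act_meas2 by (simp add: case_prod_beta')

lemma fact_meas[measurable]: "(\<lambda>z. f (act (snd z) (fst z))) \<in> borel_measurable (P \<Otimes>\<^sub>M Q)"
  using measurable_compose[OF act_meas3 f_meas] .

lemma fact_nth_meas[measurable]: "(\<lambda>z. f (act (snd z) (fst z)) $ i) \<in> borel_measurable (P \<Otimes>\<^sub>M Q)"
  using measurable_compose[OF fact_meas borel_measurable_nth] .

lemma avg_meas:
  fixes K :: "'x \<Rightarrow> 'g \<Rightarrow> real"
  assumes "(\<lambda>z. K (fst z) (snd z)) \<in> borel_measurable (P \<Otimes>\<^sub>M Q)"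
  shows "(\<lambda>x. \<integral>g. K x g \<partial>Q) \<in> borel_measurable P"
  using sigma_finite_measure.borel_measurable_lebesgue_integral[OF Qsf, of K P] assms
  by (simp add: case_prod_beta')

lemma f_sq: "integrable P (\<lambda>x. (norm (f x))\<^sup>2)"
  using int_transfer_iff[of "\<lambda>x. (norm (f x))\<^sup>2"] L2_int by simp

lemma f_int: "integrable P f"
proof (rule Bochner_Integration.integrable_bound[OF _ f_meas])
  show "integrable P (\<lambda>x. 1 + (norm (f x))\<^sup>2)"
    by (rule Bochner_Integration.integrable_add[OF finite_measure.integrable_const[OF prob_space.finite_measure[OF P]] f_sq])
  show "AE x in P. norm (f x) \<le> norm (1 + (norm (f x))\<^sup>2)"
  proof (rule AE_I2)
    fix x
    have "0 \<le> (norm (f x) - 1)\<^sup>2" by simp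
    then have "2 * norm (f x) \<le> 1 + norm (f x) * norm (f x)" by (simp add: power2_eq_square algebra_simps)
    then have "norm (f x) \<le> 1 + (norm (f x))\<^sup>2"
      using norm_ge_zero[of "f x"] unfolding power2_eq_square by linarith
    then show "norm (f x) \<le> norm (1 + (norm (f x))\<^sup>2)" by simp
  qed
qed

lemma fi_int: "integrable P (\<lambda>x. f x $ i)"
  using Bochner_Integration.integrable_bounded_linear[OF bounded_linear_vec_nth f_int] by simp

lemma prod_le: "\<bar>f x $ i * f x $ j\<bar> \<le> (norm (f x))\<^sup>2"
proof -
  have "\<bar>f x $ i * f x $ j\<bar> = \<bar>f x $ i\<bar> * \<bar>f x $ j\<bar>" by (simp add: abs_mult)
  also have "\<dots> \<le> norm (f x) * norm (f x)"
    by (intro mult_mono component_le_norm_cart) auto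
  finally show ?thesis by (simp add: power2_eq_square)
qed

lemma fij_int: "integrable P (\<lambda>x. f x $ i * f x $ j)"
  by (rule Bochner_Integration.integrable_bound[OF f_sq]) (auto intro: prod_le order_trans[OF _ abs_ge_self])

definition "mu i x = (\<integral>g. f (act g x) $ i \<partial>Q)"
definition "S i j x = (\<integral>g. f (act g x) $ i * f (act g x) $ j \<partial>Q)"

lemma mu_meas[measurable]: "(\<lambda>x. mu i x) \<in> borel_measurable P"
  unfolding mu_def by (rule avg_meas) measurable

lemma fb_meas[measurable]: "orbit_avg Q act f \<in> borel_measurable P"
  unfolding orbit_avg_def
  using sigma_finite_measure.borel_measurable_lebesgue_integral[OF Qsf, of "\<lambda>x g. f (act g x)" P] L2_meas
  by simp

lemma fb_int: "integrable P (orbit_avg Q act f)"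
  using int_transfer(3)[OF f_meas f_int] unfolding orbit_avg_def by simp

lemma part2: "(LINT x|P. f x) = (LINT x|P. orbit_avg Q act f x)"
  using int_transfer(4)[OF f_meas f_int] unfolding orbit_avg_def by simp

lemma fb_comp: "AE x in P. \<forall>i. orbit_avg Q act f x $ i = mu i x"
  using int_transfer(2)[OF f_meas f_int]
proof eventually_elim
  case (elim x)
  show ?case unfolding orbit_avg_def mu_def
    using integral_bounded_linear[OF bounded_linear_vec_nth elim] by simp
qed

lemma fbi_int: "integrable P (\<lambda>x. orbit_avg Q act f x $ i)"
  using integrable_bounded_linear[OF bounded_linear_vec_nth fb_int] by simp

lemma m_eq: "(\<integral>x. f x $ i \<partial>P) = (\<integral>x. orbit_avg Q act f x $ i \<partial>P)"
  using part2 integral_bounded_linear[OF bounded_linear_vec_nth f_int, of i]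
    integral_bounded_linear[OF bounded_linear_vec_nth fb_int, of i] by simp

lemma part1_i: "AE x in P. orbit_avg Q act f x $ i = real_cond_exp P (orbit_sigma P G act) (\<lambda>y. f y $ i) x"
proof -
  interpret sigma_finite_subalgebra P "orbit_sigma P G act" by (rule sfs)
  have "AE x in P. real_cond_exp P (orbit_sigma P G act) (\<lambda>y. f y $ i) x = orbit_avg Q act f x $ i"
  proof (rule real_cond_exp_charact)
    fix A assume A: "A \<in> sets (orbit_sigma P G act)"
    then have AP[measurable]: "A \<in> sets P" using subalg unfolding subalgebra_def by auto
    have hint: "integrable P (\<lambda>y. indicator A y * f y $ i)"
      using integrable_real_mult_indicator[OF AP fi_int, of i] by (simp add: mult.commute)
    have "(LINT x:A|P. orbit_avg Q act f x $ i) = (\<integral>x. indicator A x * mu i x \<partial>P)"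
      unfolding set_lebesgue_integral_def using fb_comp
      by (intro integral_cong_AE) (auto elim!: AE_mp)
    also have "\<dots> = (\<integral>x. (\<integral>g. indicator A (act g x) * f (act g x) $ i \<partial>Q) \<partial>P)"
    proof (rule Bochner_Integration.integral_cong[OF refl])
      fix x assume x: "x \<in> space P"
      have "(\<integral>g. indicator A (act g x) * f (act g x) $ i \<partial>Q) = (\<integral>g. indicator A x * f (act g x) $ i \<partial>Q)"
        by (rule Bochner_Integration.integral_cong[OF refl]) (simp add: ind_inv[OF A x] PQ)
      also have "\<dots> = indicator A x * mu i x" unfolding mu_def by simp
      finally show "indicator A x * mu i x = (\<integral>g. indicator A (act g x) * f (act g x) $ i \<partial>Q)" by simp
    qed
    also have "\<dots> = (\<integral>y. indicator A y * f y $ i \<partial>P)"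
      by (rule int_transfer(4)[OF _ hint]) measurable
    also have "\<dots> = (LINT x:A|P. f x $ i)"
      unfolding set_lebesgue_integral_def by simp
    finally show "(LINT x:A|P. f x $ i) = (LINT x:A|P. orbit_avg Q act f x $ i)" by simp
  next
    show "integrable P (\<lambda>y. f y $ i)" by (rule fi_int)
    show "integrable P (\<lambda>x. orbit_avg Q act f x $ i)" by (rule fbi_int)
    show "(\<lambda>x. orbit_avg Q act f x $ i) \<in> borel_measurable (orbit_sigma P G act)"
      by (rule inv_meas) (auto simp: avg_invariant[OF f_meas])
  qed
  then show ?thesis by eventually_elim simp
qed

lemma part1: "AE x in P. \<forall>i. orbit_avg Q act f x $ i = real_cond_exp P (orbit_sigma P G act) (\<lambda>y. f y $ i) x"
  unfolding AE_all_countable using part1_i by blast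

lemma abs_prod_le: fixes a b :: real shows "\<bar>a * b\<bar> \<le> a\<^sup>2 + b\<^sup>2"
proof -
  have "0 \<le> (\<bar>a\<bar> - \<bar>b\<bar>)\<^sup>2" by simp
  then have "2 * (\<bar>a\<bar> * \<bar>b\<bar>) \<le> \<bar>a\<bar>\<^sup>2 + \<bar>b\<bar>\<^sup>2" by (simp add: power2_diff)
  moreover have "\<bar>a * b\<bar> = \<bar>a\<bar> * \<bar>b\<bar>" by (simp add: abs_mult)
  moreover have "\<bar>a\<bar>\<^sup>2 = a\<^sup>2" "\<bar>b\<bar>\<^sup>2 = b\<^sup>2" by simp_all
  moreover have "0 \<le> \<bar>a\<bar> * \<bar>b\<bar>" by simp
  ultimately show ?thesis by linarith
qed

lemma AE_Q_int: "AE x in P. \<forall>i j. integrable Q (\<lambda>g. f (act g x) $ i * f (act g x) $ j) \<and> integrable Q (\<lambda>g. f (act g x) $ i)"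
proof -
  have "AE x in P. integrable Q (\<lambda>g. f (act g x) $ i * f (act g x) $ j) \<and> integrable Q (\<lambda>g. f (act g x) $ i)" for i j
    using int_transfer(2)[of "\<lambda>y. f y $ i * f y $ j", OF _ fij_int] int_transfer(2)[of "\<lambda>y. f y $ i", OF _ fi_int]
    by (auto elim: AE_mp)
  then show ?thesis unfolding AE_all_countable by blast
qed

lemma S_int: "integrable P (S i j)"
  using int_transfer(3)[of "\<lambda>y. f y $ i * f y $ j", OF _ fij_int] unfolding S_def by simp

lemma S_eq: "(\<integral>x. S i j x \<partial>P) = (\<integral>x. f x $ i * f x $ j \<partial>P)"
  using int_transfer(4)[of "\<lambda>y. f y $ i * f y $ j", OF _ fij_int] unfolding S_def by simp

lemma cQ_def_eq: "cov_mat Q (\<lambda>g. f (act g x)) $ i $ j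
   = (\<integral>g. (f (act g x) $ i - mu i x) * (f (act g x) $ j - mu j x) \<partial>Q)"
  by (simp add: cov_mat_def mu_def)

lemma cQ_eq: "AE x in P. cov_mat Q (\<lambda>g. f (act g x)) $ i $ j = S i j x - mu i x * mu j x"
  using AE_Q_int
proof eventually_elim
  case (elim x)
  show ?case unfolding cQ_def_eq S_def mu_def
    by (rule cov_expand[OF PQ(1)]) (use elim in auto)
qed

lemma var_le: "AE x in P. (mu i x)\<^sup>2 \<le> S i i x"
  using AE_Q_int
proof eventually_elim
  case (elim x)
  have "0 \<le> (\<integral>g. (f (act g x) $ i - mu i x) * (f (act g x) $ i - mu i x) \<partial>Q)"
    by (rule integral_nonneg_AE) simp
  also have "\<dots> = S i i x - mu i x * mu i x"
    unfolding S_def mu_def by (rule cov_expand[OF PQ(1)]) (use elim in auto)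
  finally show ?case by (simp add: power2_eq_square)
qed

lemma fbfb_int: "integrable P (\<lambda>x. orbit_avg Q act f x $ i * orbit_avg Q act f x $ j)"
proof (rule Bochner_Integration.integrable_bound)
  show "integrable P (\<lambda>x. S i i x + S j j x)" using S_int by simp
  show "(\<lambda>x. orbit_avg Q act f x $ i * orbit_avg Q act f x $ j) \<in> borel_measurable P" by measurable
  show "AE x in P. norm (orbit_avg Q act f x $ i * orbit_avg Q act f x $ j) \<le> norm (S i i x + S j j x)"
    using fb_comp var_le[of i] var_le[of j]
  proof eventually_elim
    case (elim x)
    have "\<bar>mu i x * mu j x\<bar> \<le> (mu i x)\<^sup>2 + (mu j x)\<^sup>2" by (rule abs_prod_le)
    then show ?case using elim by auto
  qed
qed

lemma S_meas[measurable]: "S i j \<in> borel_measurable P"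
  using S_int by (rule borel_measurable_integrable)

lemma cQ_int: "integrable P (\<lambda>x. cov_mat Q (\<lambda>g. f (act g x)) $ i $ j)"
proof -
  have m: "(\<lambda>x. cov_mat Q (\<lambda>g. f (act g x)) $ i $ j) \<in> borel_measurable P"
    unfolding cQ_def_eq by (rule avg_meas) measurable
  have "integrable P (\<lambda>x. S i j x - orbit_avg Q act f x $ i * orbit_avg Q act f x $ j)"
    using S_int fbfb_int by simp
  moreover have "AE x in P. cov_mat Q (\<lambda>g. f (act g x)) $ i $ j = S i j x - orbit_avg Q act f x $ i * orbit_avg Q act f x $ j"
    using cQ_eq fb_comp by eventually_elim simp
  ultimately show ?thesis using m by (subst integrable_cong_AE[OF m _ ]) (auto)
qed

lemma cQ_integral: "(\<integral>x. cov_mat Q (\<lambda>g. f (act g x)) $ i $ j \<partial>P)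
  = (\<integral>x. f x $ i * f x $ j \<partial>P) - (\<integral>x. orbit_avg Q act f x $ i * orbit_avg Q act f x $ j \<partial>P)"
proof -
  have "(\<integral>x. cov_mat Q (\<lambda>g. f (act g x)) $ i $ j \<partial>P)
      = (\<integral>x. S i j x - orbit_avg Q act f x $ i * orbit_avg Q act f x $ j \<partial>P)"
  proof (rule integral_cong_AE)
    show "(\<lambda>x. cov_mat Q (\<lambda>g. f (act g x)) $ i $ j) \<in> borel_measurable P"
      using cQ_int by (rule borel_measurable_integrable)
    show "(\<lambda>x. S i j x - orbit_avg Q act f x $ i * orbit_avg Q act f x $ j) \<in> borel_measurable P"
      by measurable
    show "AE x in P. cov_mat Q (\<lambda>g. f (act g x)) $ i $ j = S i j x - orbit_avg Q act f x $ i * orbit_avg Q act f x $ j"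
      using cQ_eq[of i j] fb_comp by eventually_elim simp
  qed
  also have "\<dots> = (\<integral>x. S i j x \<partial>P) - (\<integral>x. orbit_avg Q act f x $ i * orbit_avg Q act f x $ j \<partial>P)"
    using S_int fbfb_int by simp
  finally show ?thesis by (simp add: S_eq)
qed

lemma part3: "cov_mat P f = cov_mat P (orbit_avg Q act f) + (LINT x|P. cov_mat Q (\<lambda>g. f (act g x)))"
proof -
  have C: "integrable P (\<lambda>x. cov_mat Q (\<lambda>g. f (act g x)))"
    "\<And>i j. (LINT x|P. cov_mat Q (\<lambda>g. f (act g x))) $ i $ j = (\<integral>x. cov_mat Q (\<lambda>g. f (act g x)) $ i $ j \<partial>P)"
    using mat_integrable[of P "\<lambda>x. cov_mat Q (\<lambda>g. f (act g x))", OF cQ_int] by auto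
  show ?thesis
  proof (simp only: vec_eq_iff, intro allI)
    fix i j
    have e1: "cov_mat P f $ i $ j = (\<integral>x. f x $ i * f x $ j \<partial>P) - (\<integral>x. f x $ i \<partial>P) * (\<integral>x. f x $ j \<partial>P)"
      unfolding cov_mat_def using cov_expand[OF P fi_int fi_int fij_int] by simp
    have e2: "cov_mat P (orbit_avg Q act f) $ i $ j = (\<integral>x. orbit_avg Q act f x $ i * orbit_avg Q act f x $ j \<partial>P)
       - (\<integral>x. f x $ i \<partial>P) * (\<integral>x. f x $ j \<partial>P)"
      unfolding cov_mat_def using cov_expand[OF P fbi_int fbi_int fbfb_int] by (simp add: m_eq)
    show "cov_mat P f $ i $ j = (cov_mat P (orbit_avg Q act f) + (LINT x|P. cov_mat Q (\<lambda>g. f (act g x)))) $ i $ j"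
      using e1 e2 C(2)[of i j] cQ_integral[of i j] by simp
  qed
qed

lemma part4:
  fixes \<phi> :: "real^'k \<Rightarrow> real"
  assumes cv: "convex_on UNIV \<phi>" and phi_int: "integrable P (\<lambda>x. \<phi> (f x))"
  shows "integrable P (\<lambda>x. \<phi> (orbit_avg Q act f x))
          \<and> (LINT x|P. \<phi> (f x)) \<ge> (LINT x|P. \<phi> (orbit_avg Q act f x))"
proof -
  have phim[measurable]: "\<phi> \<in> borel_measurable borel"
    by (rule borel_measurable_continuous_onI[OF convex_on_continuous[OF open_UNIV cv]])
  have pfm[measurable]: "(\<lambda>x. \<phi> (f x)) \<in> borel_measurable P" by measurable
  define H where "H x = (\<integral>g. \<phi> (f (act g x)) \<partial>Q)" for x
  have H_int: "integrable P H" unfolding H_def by (rule int_transfer(3)[OF pfm phi_int])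
  have H_eq: "(\<integral>x. H x \<partial>P) = (\<integral>x. \<phi> (f x) \<partial>P)" unfolding H_def by (rule int_transfer(4)[OF pfm phi_int])
  have J: "AE x in P. \<phi> (orbit_avg Q act f x) \<le> H x"
    using int_transfer(2)[OF pfm phi_int] int_transfer(2)[OF f_meas f_int]
  proof eventually_elim
    case (elim x)
    show ?case unfolding H_def orbit_avg_def
      by (rule jensen_vec[OF PQ(1) cv]) (use elim in auto)
  qed
  obtain a where a: "\<And>y. \<phi> 0 + inner a (y - 0) \<le> \<phi> y" using subgradient[OF cv] by blast
  have I: "integrable P (\<lambda>x. \<phi> (orbit_avg Q act f x))"
  proof (rule Bochner_Integration.integrable_bound)
    show "integrable P (\<lambda>x. \<bar>H x\<bar> + \<bar>\<phi> 0 + inner a (orbit_avg Q act f x)\<bar>)"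
    proof -
      have i1: "integrable P (\<lambda>x. inner a (orbit_avg Q act f x))" using fb_int by simp
      have i2: "integrable P (\<lambda>x. \<phi> 0 + inner a (orbit_avg Q act f x))"
        by (rule Bochner_Integration.integrable_add[OF finite_measure.integrable_const[OF prob_space.finite_measure[OF P]] i1])
      show ?thesis
        by (rule Bochner_Integration.integrable_add[OF integrable_abs[OF H_int] integrable_abs[OF i2]])
    qed
    show "(\<lambda>x. \<phi> (orbit_avg Q act f x)) \<in> borel_measurable P" by measurable
    show "AE x in P. norm (\<phi> (orbit_avg Q act f x)) \<le> norm (\<bar>H x\<bar> + \<bar>\<phi> 0 + inner a (orbit_avg Q act f x)\<bar>)"
      using J
    proof eventually_elim
      case (elim x)
      have "\<phi> 0 + inner a (orbit_avg Q act f x) \<le> \<phi> (orbit_avg Q act f x)" using a[of "orbit_avg Q act f x"] by simp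
      then show ?case using elim by auto
    qed
  qed
  have "(LINT x|P. \<phi> (orbit_avg Q act f x)) \<le> (\<integral>x. H x \<partial>P)"
    by (rule integral_mono_AE[OF I H_int J])
  then show ?thesis using I H_eq by simp
qed

end

theorem lemma4p1:
  fixes P :: "'x measure" and G :: "('g, 'b) monoid_scheme" and T :: "'g topology"
    and Q :: "'g measure" and act :: "'g \<Rightarrow> 'x \<Rightarrow> 'x" and f :: "'x \<Rightarrow> real^'k"
  assumes P: "prob_space P"
    and G: "compact_topological_group G T"
    and Q: "haar_probability G T Q"
    and action: "group_action G (space P) act"
    and act_meas: "(\<lambda>(g, x). act g x) \<in> measurable (Q \<Otimes>\<^sub>M P) P"
    and invariance: "AE g in Q. distr P P (act g) = P"
    and f_meas: "f \<in> borel_measurable P"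
    and L2_meas: "(\<lambda>(x, g). f (act g x)) \<in> borel_measurable (P \<Otimes>\<^sub>M Q)"
    and L2_int: "integrable (P \<Otimes>\<^sub>M Q) (\<lambda>(x, g). (norm (f (act g x)))\<^sup>2)"
  shows
    "(AE x in P. \<forall>i. orbit_avg Q act f x $ i
                       = real_cond_exp P (orbit_sigma P G act) (\<lambda>y. f y $ i) x)
     \<and> (LINT x|P. f x) = (LINT x|P. orbit_avg Q act f x)
     \<and> cov_mat P f = cov_mat P (orbit_avg Q act f)
                     + (LINT x|P. cov_mat Q (\<lambda>g. f (act g x)))
     \<and> (\<forall>\<phi> :: real^'k \<Rightarrow> real. convex_on UNIV \<phi> \<longrightarrow>
          integrable P (\<lambda>x. \<phi> (f x)) \<longrightarrow>
          integrable P (\<lambda>x. \<phi> (orbit_avg Q act f x))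
          \<and> (LINT x|P. \<phi> (f x)) \<ge> (LINT x|P. \<phi> (orbit_avg Q act f x)))"
proof -
  interpret L4f P G T Q act f
    by (intro L4f.intro L4f_axioms.intro L4.intro) (fact assms)+
  show ?thesis using part1 part2 part3 part4 by blast
qed

end
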